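(* Let $n\ge1$ and let $d_1,\dots,d_n$ be positive real numbers. Let $\mathbf{d}_n=\operatorname{diag}(d_1,\dots,d_n)$, let $\mathbf{L}_n$ be the $n\times n$ lower triangular matrix all of whose entries on and below the diagonal equal $1$, and let $$\mathbf{M}(\mathbf{d}_n)=\mathbf{L}_n\mathbf{d}_n+\mathbf{d}_n\mathbf{L}_n^{\mathrm{T}}-\mathbf{d}_n.$$ Then the real symmetric matrix $\mathbf{M}(\mathbf{d}_n)$ is positive definite if and only if $d_1<d_2<\dots<d_n$. *)

theory Defs
  imports "Jordan_Normal_Form.Matrix"
begin

definition lower_ones :: "nat \<Rightarrow> real mat" where
  "lower_ones n = mat n n (\<lambda>(i, j). if j \<le> i then 1 else 0)"

text \<open>Diagonal matrix diag(d_1,...,d_n), with d_{i+1} stored at index i.\<close>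
definition diag_mat :: "nat \<Rightarrow> (nat \<Rightarrow> real) \<Rightarrow> real mat" where
  "diag_mat n d = mat n n (\<lambda>(i, j). if i = j then d i else 0)"

definition M_mat :: "nat \<Rightarrow> (nat \<Rightarrow> real) \<Rightarrow> real mat" where
  "M_mat n d = lower_ones n * diag_mat n d + diag_mat n d * transpose_mat (lower_ones n) - diag_mat n d"

definition pos_definite :: "real mat \<Rightarrow> bool" where
  "pos_definite A \<longleftrightarrow> A \<in> carrier_mat (dim_row A) (dim_row A) \<and> A = transpose_mat A \<and>
     (\<forall>x \<in> carrier_vec (dim_row A). x \<noteq> 0\<^sub>v (dim_row A) \<longrightarrow> x \<bullet> (A *\<^sub>v x) > 0)"

end

theory Submission
  imports Defs
begin

definition ee :: "(nat \<Rightarrow> real) \<Rightarrow> nat \<Rightarrow> real" where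
  "ee d l = d l - (if l = 0 then 0 else d (l - 1))"

lemma tele: "(\<Sum>l\<le>m. ee d l) = d m"
  by (induction m) (auto simp: ee_def)

lemma dmin: "i < n \<Longrightarrow> j < n \<Longrightarrow> d (min i j) = (\<Sum>l<n. if l \<le> i \<and> l \<le> j then ee d l else 0)"
proof -
  assume "i < n" "j < n"
  have "(\<Sum>l<n. if l \<le> i \<and> l \<le> j then ee d l else 0) = (\<Sum>l\<in>{..<n} \<inter> {l. l \<le> min i j}. ee d l)"
    by (simp add: sum.inter_restrict)
  also have "{..<n} \<inter> {l. l \<le> min i j} = {..min i j}" using \<open>i<n\<close> by auto
  finally show ?thesis by (simp add: tele)
qed

lemma quad: fixes d x :: "nat \<Rightarrow> real"
  shows "(\<Sum>i<n. x i * (\<Sum>j<n. d (min i j) * x j)) = (\<Sum>l<n. ee d l * (\<Sum>i\<in>{l..<n}. x i)^2)"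
proof -
  define F where "F l i j = (if l \<le> i \<and> l \<le> j then ee d l else 0)" for l i j
  have s1: "x i * (\<Sum>j<n. d (min i j) * x j) = (\<Sum>j<n. \<Sum>l<n. F l i j * x i * x j)" if i: "i < n" for i
  proof -
    have "x i * (\<Sum>j<n. d (min i j) * x j) = (\<Sum>j<n. x i * (d (min i j) * x j))"
      by (rule sum_distrib_left)
    also have "\<dots> = (\<Sum>j<n. (\<Sum>l<n. F l i j) * (x i * x j))"
    proof (rule sum.cong[OF refl])
      fix j assume "j \<in> {..<n}"
      then have "d (min i j) = (\<Sum>l<n. F l i j)" using i unfolding F_def by (intro dmin) auto
      then show "x i * (d (min i j) * x j) = (\<Sum>l<n. F l i j) * (x i * x j)" by simp
    qed
    also have "\<dots> = (\<Sum>j<n. \<Sum>l<n. F l i j * (x i * x j))"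
      by (rule sum.cong[OF refl]) (rule sum_distrib_right)
    finally show ?thesis by (simp only: mult.assoc)
  qed
  have "(\<Sum>i<n. x i * (\<Sum>j<n. d (min i j) * x j)) = (\<Sum>i<n. \<Sum>j<n. \<Sum>l<n. F l i j * x i * x j)"
    by (rule sum.cong[OF refl]) (use s1 in blast)
  also have "\<dots> = (\<Sum>i<n. \<Sum>l<n. \<Sum>j<n. F l i j * x i * x j)"
    by (rule sum.cong[OF refl]) (rule sum.swap)
  also have "\<dots> = (\<Sum>l<n. \<Sum>i<n. \<Sum>j<n. F l i j * x i * x j)"
    by (rule sum.swap)
  also have "\<dots> = (\<Sum>l<n. ee d l * (\<Sum>i\<in>{l..<n}. x i)^2)"
  proof (rule sum.cong[OF refl])
    fix l assume "l \<in> {..<n}"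
    define y where "y i = (if l \<le> i then x i else 0)" for i
    have a: "(\<Sum>i<n. y i) = (\<Sum>i\<in>{l..<n}. x i)"
    proof -
      have "(\<Sum>i<n. y i) = (\<Sum>i\<in>{..<n} \<inter> {i. l \<le> i}. x i)"
        unfolding y_def by (simp add: sum.inter_restrict)
      also have "{..<n} \<inter> {i. l \<le> i} = {l..<n}" by auto
      finally show ?thesis .
    qed
    have "(\<Sum>i<n. \<Sum>j<n. F l i j * x i * x j) = (\<Sum>i<n. \<Sum>j<n. ee d l * (y i * y j))"
      unfolding F_def y_def by (intro sum.cong refl) simp
    also have "\<dots> = ee d l * ((\<Sum>i<n. y i) * (\<Sum>j<n. y j))"
      by (simp only: sum_distrib_left[symmetric] sum_product)
    finally show "(\<Sum>i<n. \<Sum>j<n. F l i j * x i * x j) = ee d l * (\<Sum>i\<in>{l..<n}. x i)^2"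
      using a by (simp add: power2_eq_square)
  qed
  finally show ?thesis .
qed

lemma Mform: "M_mat n d = mat n n (\<lambda>(i,j). d (min i j))"
proof (rule eq_matI)
  fix i j assume ij: "i < dim_row (mat n n (\<lambda>(i,j). d (min i j)))" "j < dim_col (mat n n (\<lambda>(i,j). d (min i j)))"
  hence i: "i < n" and j: "j < n" by auto
  have 1: "(lower_ones n * diag_mat n d) $$ (i,j) = (if j \<le> i then d j else 0)"
  proof -
    have "(lower_ones n * diag_mat n d) $$ (i,j) = (\<Sum>k<n. (if k \<le> i then 1 else 0) * (if k = j then d k else 0))"
      using i j by (simp add: lower_ones_def diag_mat_def scalar_prod_def row_def col_def lessThan_atLeast0)
    also have "\<dots> = (\<Sum>k<n. if k = j then (if j \<le> i then d j else 0) else 0)"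
      by (intro sum.cong refl) auto
    finally show ?thesis using j by simp
  qed
  have 2: "(diag_mat n d * transpose_mat (lower_ones n)) $$ (i,j) = (if i \<le> j then d i else 0)"
  proof -
    have "(diag_mat n d * transpose_mat (lower_ones n)) $$ (i,j) = (\<Sum>k<n. (if i = k then d i else 0) * (if k \<le> j then 1 else 0))"
      using i j by (simp add: lower_ones_def diag_mat_def scalar_prod_def row_def col_def lessThan_atLeast0)
    also have "\<dots> = (\<Sum>k<n. if k = i then (if i \<le> j then d i else 0) else 0)"
      by (intro sum.cong refl) auto
    finally show ?thesis using i by simp
  qed
  show "M_mat n d $$ (i, j) = mat n n (\<lambda>(i,j). d (min i j)) $$ (i, j)"
    using i j 1 2 by (auto simp: M_mat_def diag_mat_def lower_ones_def min_def)
qed (auto simp: M_mat_def lower_ones_def diag_mat_def)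

lemma qform: assumes "x \<in> carrier_vec n"
  shows "x \<bullet> (M_mat n d *\<^sub>v x) = (\<Sum>i<n. x$i * (\<Sum>j<n. d (min i j) * x$j))"
  using assms by (simp add: Mform scalar_prod_def lessThan_atLeast0 row_def mult_ac)


lemma pick: fixes f :: "nat \<Rightarrow> real" assumes "1 \<le> k" "k < n"
  shows "(\<Sum>j<n. f j * (if j = k then 1 else if j = k - 1 then -1 else 0)) = f k - f (k - 1)"
proof -
  have "(\<Sum>j<n. f j * (if j = k then 1 else if j = k - 1 then -1 else 0))
     = (\<Sum>j<n. (if j = k then f j else 0) - (if j = k - 1 then f j else 0))"
    using assms by (intro sum.cong refl) auto
  also have "\<dots> = f k - f (k - 1)" using assms by (simp add: sum_subtractf)
  finally show ?thesis .
qed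

theorem lemma6:
  fixes n :: nat and d :: "nat \<Rightarrow> real"
  assumes "n \<ge> 1"
    and "\<And>i. i < n \<Longrightarrow> d i > 0"
  shows "pos_definite (M_mat n d) \<longleftrightarrow> (\<forall>i j. i < j \<and> j < n \<longrightarrow> d i < d j)"
proof
  assume pd: "pos_definite (M_mat n d)"
  have dr: "dim_row (M_mat n d) = n" by (simp add: Mform)
  have cons: "d (k - 1) < d k" if k: "1 \<le> k" "k < n" for k
  proof -
    define x where "x = vec n (\<lambda>j. if j = k then 1 else if j = k - 1 then -1 else (0::real))"
    have xc: "x \<in> carrier_vec n" by (simp add: x_def)
    have "x $ k = 1" using k by (simp add: x_def)
    hence xn: "x \<noteq> 0\<^sub>v n" using k by auto
    have "x \<bullet> (M_mat n d *\<^sub>v x) > 0" using pd xc xn dr unfolding pos_definite_def by auto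
    also have "x \<bullet> (M_mat n d *\<^sub>v x) = (\<Sum>i<n. x$i * (\<Sum>j<n. d (min i j) * x$j))"
      by (rule qform[OF xc])
    also have "\<dots> = (\<Sum>i<n. (\<Sum>j<n. d (min i j) * x$j) * (if i = k then 1 else if i = k - 1 then -1 else 0))"
      by (intro sum.cong refl) (simp add: x_def)
    also have "\<dots> = (\<Sum>j<n. d (min k j) * x$j) - (\<Sum>j<n. d (min (k-1) j) * x$j)"
      by (rule pick[OF k])
    also have "(\<Sum>j<n. d (min k j) * x$j) = d (min k k) - d (min k (k-1))"
    proof -
      have "(\<Sum>j<n. d (min k j) * x$j) = (\<Sum>j<n. d (min k j) * (if j = k then 1 else if j = k - 1 then -1 else 0))"
        by (intro sum.cong refl) (simp add: x_def)
      also have "\<dots> = d (min k k) - d (min k (k-1))" by (rule pick[OF k])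
      finally show ?thesis by (simp add: min.commute)
    qed
    also have "(\<Sum>j<n. d (min (k-1) j) * x$j) = d (min (k-1) k) - d (min (k-1) (k-1))"
    proof -
      have "(\<Sum>j<n. d (min (k-1) j) * x$j) = (\<Sum>j<n. d (min (k-1) j) * (if j = k then 1 else if j = k - 1 then -1 else 0))"
        by (intro sum.cong refl) (simp add: x_def)
      also have "\<dots> = d (min (k-1) k) - d (min (k-1) (k-1))" by (rule pick[OF k])
      finally show ?thesis by (simp add: min.commute)
    qed
    finally have "0 < d (min k k) - d (min k (k - 1)) - (d (min (k - 1) k) - d (min (k - 1) (k - 1)))" .
    moreover have "min k (k-1) = k-1" "min (k-1) k = k-1" using k by auto
    ultimately show ?thesis by simp
  qed
  show "\<forall>i j. i < j \<and> j < n \<longrightarrow> d i < d j"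
  proof (intro allI impI)
    fix i j assume "i < j \<and> j < n"
    then show "d i < d j"
    proof (induction j)
      case 0 then show ?case by simp
    next
      case (Suc m)
      have c: "d m < d (Suc m)" using cons[of "Suc m"] Suc.prems by simp
      show ?case
      proof (cases "i = m")
        case True then show ?thesis using c by simp
      next
        case False then have "d i < d m" using Suc by auto
        then show ?thesis using c by simp
      qed
    qed
  qed
next
  assume inc: "\<forall>i j. i < j \<and> j < n \<longrightarrow> d i < d j"
  have epos: "ee d l > 0" if "l < n" for l
  proof (cases l)
    case 0 then show ?thesis using assms(2)[of 0] that by (simp add: ee_def)
  next
    case (Suc m) then show ?thesis using inc that by (simp add: ee_def)
  qed
  show "pos_definite (M_mat n d)"
    unfolding pos_definite_def
  proof (intro conjI ballI impI)
    show "M_mat n d \<in> carrier_mat (dim_row (M_mat n d)) (dim_row (M_mat n d))" by (simp add: Mform)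
    show "M_mat n d = (M_mat n d)\<^sup>T" by (rule eq_matI) (auto simp: Mform min.commute)
    fix x :: "real vec" assume xc0: "x \<in> carrier_vec (dim_row (M_mat n d))" and xn0: "x \<noteq> 0\<^sub>v (dim_row (M_mat n d))"
    have xc: "x \<in> carrier_vec n" and xn: "x \<noteq> 0\<^sub>v n" using xc0 xn0 by (auto simp: Mform)
    define s where "s l = (\<Sum>i\<in>{l..<n}. x$i)" for l
    have "\<exists>l<n. s l \<noteq> 0"
    proof (rule ccontr)
      assume "\<not> ?thesis"
      hence z: "\<And>l. l < n \<Longrightarrow> s l = 0" by auto
      have "x = 0\<^sub>v n"
      proof (rule eq_vecI)
        show "dim_vec x = dim_vec (0\<^sub>v n)" using xc by simp
        fix i assume "i < dim_vec (0\<^sub>v n)"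
        hence i: "i < n" by simp
        have "s i = x$i + s (Suc i)" unfolding s_def using i
          by (simp add: sum.atLeast_Suc_lessThan)
        moreover have "s (Suc i) = 0" using z[of "Suc i"] by (cases "Suc i < n") (auto simp: s_def)
        ultimately show "x $ i = 0\<^sub>v n $ i" using z[OF i] i by simp
      qed
      with xn show False by simp
    qed
    then obtain l where l: "l < n" "s l \<noteq> 0" by auto
    have "x \<bullet> (M_mat n d *\<^sub>v x) = (\<Sum>l<n. ee d l * (s l)^2)"
      unfolding qform[OF xc] quad s_def ..
    also have "\<dots> > 0"
      proof (rule sum_pos2[of _ l])
      show "0 < ee d l * (s l)^2" using epos[OF l(1)] l(2) by simp
      show "0 \<le> ee d i * (s i)^2" if "i \<in> {..<n}" for i
        using epos[of i] that by simp
    qed (use l in auto)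
    finally show "x \<bullet> (M_mat n d *\<^sub>v x) > 0" .
  qed
qed

end
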